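(* Let $S$ be a hyperbolic Riemann surface with universal cover $\mathbb H^+$ and deck group action $\rho_{can}:\pi_1(S,x_0)\to PSL(2,\mathbb R)$, and let $T^1\mathcal F_{can}=(T^1\mathbb H^+\times\mathbb CP^1)/\pi_1(S,x_0)$ with action $\gamma\cdot(v,z)=(\rho_{can}(\gamma)_*v,\rho_{can}(\gamma)z)$. Let $X_{can}$ be the generator of the foliated geodesic flow (induced by $(X,0)$, $X$ the geodesic flow generator on $T^1\mathbb H^+$) and $Y$ the vertical vector field induced by $\tilde Y$. Then the vector field $Z=X_{can}+Y$ is tangent to the diagonal $\Delta_*(T^1S)\subset T^1\mathcal F_{can}$.
   Context: Let $\iota:\mathbb H^+\to\mathbb CP^1$ be the inclusion. For $v\in T^1\mathbb H^+$ based at $p$, $\tilde\sigma^\pm(v)\in\partial\mathbb H^+$ are the forward/backward endpoints of the geodesic tangent to $v$, and $Y_v$ is the holomorphic vector field on $\mathbb CP^1$ vanishing at $\tilde\sigma^\pm(v)$ with $Y_v(\iota(p))=\iota_*(v)$; $\tilde Y(v,\cdot)=Y_v(\cdot)$. The diagonal $\Delta_*(T^1S)$ is the image in the quotient of $\{(v,\iota(p)):v\in T^1_p\mathbb H^+\}$. *)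

theory Defs
  imports "HOL-Analysis.Analysis"
begin

text \<open>The upper half plane is {p. Im p > 0} inside the affine chart C of CP^1,
  so the inclusion iota is the identity on this chart, and tangent vectors at points of C
  are complex numbers.  A unit tangent vector v in T^1 H^+ is a pair (p, w) of its base
  point p and its Euclidean vector w with hyperbolic length |w| / Im p = 1.\<close>

definition T1H :: "(complex \<times> complex) set" where
  "T1H = {(p, w). 0 < Im p \<and> cmod w = Im p}"

text \<open>Elements of SL(2,R) acting on H^+ by Moebius transformations (PSL(2,R) = SL(2,R)/{+-1}).\<close>

definition SL2R :: "(real \<times> real \<times> real \<times> real) set" where
  "SL2R = {(a, b, c, d). a * d - b * c = 1}"

fun mob :: "real \<times> real \<times> real \<times> real \<Rightarrow> complex \<Rightarrow> complex" where
  "mob (a, b, c, d) z = (of_real a * z + of_real b) / (of_real c * z + of_real d)"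

fun mob_deriv :: "real \<times> real \<times> real \<times> real \<Rightarrow> complex \<Rightarrow> complex" where
  "mob_deriv (a, b, c, d) z = 1 / (of_real c * z + of_real d)^2"

definition push :: "real \<times> real \<times> real \<times> real \<Rightarrow> complex \<times> complex \<Rightarrow> complex \<times> complex" where
  "push g v = (mob g (fst v), mob_deriv g (fst v) * snd v)"

text \<open>Geodesic flow on T^1 H^+: the unit-speed geodesic through the upward vector at i is
  t \<mapsto> i e^t; for general v write v = g_* (i, i) with g in PSL(2,R) and transport.\<close>
definition geo_flow :: "real \<Rightarrow> complex \<times> complex \<Rightarrow> complex \<times> complex" where
  "geo_flow t v = (let g = (SOME g. g \<in> SL2R \<and> push g (\<i>, \<i>) = v)
                   in push g (\<i> * of_real (exp t), \<i> * of_real (exp t)))"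

definition geo_gen :: "complex \<times> complex \<Rightarrow> complex \<times> complex" where
  "geo_gen v = vector_derivative (\<lambda>t. geo_flow t v) (at 0)"

text \<open>Points of CP^1 = C \<union> {\<infinity>} are represented as complex option (None = \<infinity>).
  Forward/backward endpoints of the geodesic tangent to v, as limits of its base point.\<close>
definition geo_endpoint :: "real filter \<Rightarrow> complex \<times> complex \<Rightarrow> complex option" where
  "geo_endpoint F v =
     (if filterlim (\<lambda>t. fst (geo_flow t v)) at_infinity F then None
      else Some (THE e. ((\<lambda>t. fst (geo_flow t v)) \<longlongrightarrow> e) F))"

definition sigma_plus :: "complex \<times> complex \<Rightarrow> complex option" where
  "sigma_plus v = geo_endpoint at_top v"

definition sigma_minus :: "complex \<times> complex \<Rightarrow> complex option" where
  "sigma_minus v = geo_endpoint at_bot v"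

text \<open>Holomorphic vector fields on CP^1: in the affine chart z they are exactly
  (a + b z + c z^2) d/dz; in the chart w = 1/z at \<infinity> the field is -(c + b w + a w^2) d/dw.\<close>
type_synonym hvf = "complex \<times> complex \<times> complex"

fun hvf_eval :: "hvf \<Rightarrow> complex \<Rightarrow> complex" where
  "hvf_eval (a, b, c) z = a + b * z + c * z^2"

fun hvf_vanishes_at :: "hvf \<Rightarrow> complex option \<Rightarrow> bool" where
  "hvf_vanishes_at (a, b, c) None = (c = 0)"
| "hvf_vanishes_at Y (Some e) = (hvf_eval Y e = 0)"

definition Yv :: "complex \<times> complex \<Rightarrow> hvf" where
  "Yv v = (THE Y. hvf_vanishes_at Y (sigma_plus v) \<and> hvf_vanishes_at Y (sigma_minus v)
                  \<and> hvf_eval Y (fst v) = snd v)"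

definition Ytilde :: "complex \<times> complex \<Rightarrow> complex \<Rightarrow> complex" where
  "Ytilde v z = hvf_eval (Yv v) z"

text \<open>The lift of Z = X_can + Y to T^1 H^+ \<times> CP^1 (over the affine chart): (X, 0) + (0, \tilde Y).\<close>
definition Zfield :: "(complex \<times> complex) \<times> complex \<Rightarrow> (complex \<times> complex) \<times> complex" where
  "Zfield q = (geo_gen (fst q), Ytilde (fst q) (snd q))"

definition diag :: "((complex \<times> complex) \<times> complex) set" where
  "diag = {(v, fst v) | v. v \<in> T1H}"

definition tangent_to :: "'a::real_normed_vector set \<Rightarrow> 'a \<Rightarrow> 'a \<Rightarrow> bool" where
  "tangent_to M q u \<longleftrightarrow> (\<exists>c e. 0 < e \<and> c 0 = q \<and> (\<forall>t. \<bar>t\<bar> < e \<longrightarrow> c t \<in> M)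
                              \<and> (c has_vector_derivative u) (at 0))"

end

theory Submission
  imports Defs
begin


lemma exists_g:
  assumes "v \<in> T1H"
  shows "\<exists>g. g \<in> SL2R \<and> push g (\<i>, \<i>) = v"
proof -
  obtain p w where v: "v = (p, w)" by (cases v)
  have y: "0 < Im p" "cmod w = Im p" using assms v by (auto simp: T1H_def)
  hence w0: "w \<noteq> 0" by auto
  define s where "s = csqrt (\<i> / w)"
  have s2: "s^2 = \<i> / w" unfolding s_def by (simp add: power2_csqrt)
  have s0: "s \<noteq> 0" using s2 w0 by auto
  have ns: "(cmod s)^2 = 1 / Im p"
    by (metis s2 y(2) norm_power norm_divide norm_ii)
  define a where "a = Im (p * s)"
  define b where "b = Re (p * s)"
  define c where "c = Im s"
  define d where "d = Re s"
  have cd: "of_real c * \<i> + of_real d = s" unfolding c_def d_def by (simp add: complex_eq_iff)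
  have ab: "of_real a * \<i> + of_real b = p * s" unfolding a_def b_def by (simp add: complex_eq_iff)
  have det: "a * d - b * c = 1"
  proof -
    have "a * d - b * c = Im p * (Re s ^2 + Im s ^2)"
      unfolding a_def b_def c_def d_def by (simp add: algebra_simps power2_eq_square)
    also have "Re s ^2 + Im s ^2 = (cmod s)^2" by (simp add: cmod_power2)
    finally show ?thesis using ns y by simp
  qed
  have "mob (a,b,c,d) \<i> = p" using ab cd s0 by (simp add: mult.commute)
  moreover have "mob_deriv (a,b,c,d) \<i> * \<i> = w"
  proof -
    have "mob_deriv (a,b,c,d) \<i> * \<i> = \<i> / s^2" using cd by (simp add: mult.commute)
    also have "\<i> / s^2 = w" using s2 w0 s0 by (simp add: field_simps)
    finally show ?thesis .
  qed
  ultimately show ?thesis using det v by (intro exI[of _ "(a,b,c,d)"]) (auto simp: SL2R_def push_def)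
qed


lemma den_nz:
  assumes "a * d - b * c = (1::real)" "r \<noteq> 0"
  shows "complex_of_real c * (\<i> * of_real r) + of_real d \<noteq> 0"
proof
  assume "complex_of_real c * (\<i> * of_real r) + of_real d = 0"
  hence "c * r = 0" "d = 0" by (auto simp: complex_eq_iff)
  thus False using assms by auto
qed

lemma push_T1H:
  assumes "a * d - b * c = (1::real)" "0 < r"
  shows "push (a,b,c,d) (\<i> * of_real r, \<i> * of_real r) \<in> T1H"
proof -
  let ?D = "complex_of_real c * (\<i> * of_real r) + of_real d"
  have nz: "?D \<noteq> 0" using den_nz assms by auto
  have DC: "?D = Complex d (c*r)" by (simp add: complex_eq_iff)
  have N: "(cmod ?D)^2 = c^2*r^2 + d^2" unfolding DC cmod_power2 by (simp add: power_mult_distrib)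
  have pos: "0 < c^2*r^2 + d^2" using nz N by (metis zero_less_norm_iff zero_less_power)
  have "Im ((of_real a * (\<i> * of_real r) + of_real b) / ?D) = r / (c^2*r^2 + d^2)"
  proof -
    have "Im ((of_real a * (\<i> * of_real r) + of_real b) / ?D) = (a*r*d - b*c*r) / (c^2*r^2 + d^2)"
      by (simp add: Im_divide power2_eq_square algebra_simps)
    also have "a*r*d - b*c*r = r" using assms(1) by (metis mult.commute mult_1 right_diff_distrib' mult.assoc)
    finally show ?thesis .
  qed
  moreover have "cmod (1 / ?D^2 * (\<i> * of_real r)) = r / (c^2*r^2 + d^2)"
    using N assms(2) by (simp add: norm_mult norm_divide norm_power)
  ultimately show ?thesis using assms pos by (simp add: push_def T1H_def)
qed


lemma inv_to_inf:
  fixes f :: "real \<Rightarrow> complex"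
  assumes "((\<lambda>t. inverse (f t)) \<longlongrightarrow> 0) F" "eventually (\<lambda>t. f t \<noteq> 0) F"
  shows "filterlim f at_infinity F"
proof -
  have "filterlim (\<lambda>t. inverse (f t)) (at 0) F"
    using assms by (intro filterlim_atI) auto
  from filterlim_compose[OF filterlim_inverse_at_infinity this]
  show ?thesis by simp
qed

lemma invexp_top: "((\<lambda>t. complex_of_real (inverse (exp t))) \<longlongrightarrow> 0) at_top"
proof -
  have "((\<lambda>t. inverse (exp t)) \<longlongrightarrow> (0::real)) at_top"
    by (rule tendsto_inverse_0_at_top[OF exp_at_top])
  from tendsto_of_real[OF this, where 'a=complex] show ?thesis by simp
qed

lemma exp_bot: "((\<lambda>t. complex_of_real (exp t)) \<longlongrightarrow> 0) at_bot"
  using tendsto_of_real[OF exp_at_bot, where 'a=complex] by simp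

definition mobt :: "real \<times> real \<times> real \<times> real \<Rightarrow> real \<Rightarrow> complex" where
  "mobt g t = mob g (\<i> * of_real (exp t))"

lemma mobt_top_fin:
  assumes "c \<noteq> 0"
  shows "(mobt (a,b,c,d) \<longlongrightarrow> of_real a / of_real c) at_top"
proof -
  have eq: "mobt (a,b,c,d) t = (of_real a * \<i> + of_real b * of_real (inverse (exp t))) /
            (of_real c * \<i> + of_real d * of_real (inverse (exp t)))" for t
  proof -
    have e: "complex_of_real (exp t) \<noteq> 0" by simp
    show ?thesis unfolding mobt_def using e
      by (simp add: divide_simps of_real_inverse) (simp add: algebra_simps)
  qed
  have "((\<lambda>t. (of_real a * \<i> + of_real b * of_real (inverse (exp t))) /
            (of_real c * \<i> + of_real d * of_real (inverse (exp t)))) \<longlongrightarrow>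
        (of_real a * \<i> + of_real b * 0) / (of_real c * \<i> + of_real d * 0)) at_top"
    using assms by (intro tendsto_intros invexp_top) auto
  thus ?thesis using assms unfolding eq[abs_def] by simp
qed

lemma mobt_top_inf:
  assumes "c = 0" "a * d - b * c = 1"
  shows "filterlim (mobt (a,b,c,d)) at_infinity at_top"
proof (rule inv_to_inf)
  have a: "a \<noteq> 0" "d \<noteq> 0" using assms by auto
  have eq: "inverse (mobt (a,b,c,d) t) = (of_real d * of_real (inverse (exp t))) /
            (of_real a * \<i> + of_real b * of_real (inverse (exp t)))" for t
  proof -
    have e: "complex_of_real (exp t) \<noteq> 0" by simp
    show ?thesis unfolding mobt_def using e assms
      by (simp add: divide_simps of_real_inverse) (simp add: algebra_simps)
  qed
  have "((\<lambda>t. (of_real d * of_real (inverse (exp t))) /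
            (of_real a * \<i> + of_real b * of_real (inverse (exp t)))) \<longlongrightarrow>
        (of_real d * 0) / (of_real a * \<i> + of_real b * 0)) at_top"
    using a by (intro tendsto_intros invexp_top) auto
  thus "((\<lambda>t. inverse (mobt (a,b,c,d) t)) \<longlongrightarrow> 0) at_top" unfolding eq by simp
  show "eventually (\<lambda>t. mobt (a,b,c,d) t \<noteq> 0) at_top"
  proof (intro always_eventually allI)
    fix t
    have "Im (mobt (a,b,c,d) t) \<noteq> 0" using a assms unfolding mobt_def by (simp add: Im_divide)
    thus "mobt (a,b,c,d) t \<noteq> 0" by auto
  qed
qed

lemma mobt_bot_fin:
  assumes "d \<noteq> 0"
  shows "(mobt (a,b,c,d) \<longlongrightarrow> of_real b / of_real d) at_bot"
proof -
  have "((\<lambda>t. (of_real a * (\<i> * of_real (exp t)) + of_real b) /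
            (of_real c * (\<i> * of_real (exp t)) + of_real d)) \<longlongrightarrow>
        (of_real a * (\<i> * 0) + of_real b) / (of_real c * (\<i> * 0) + of_real d)) at_bot"
    using assms by (intro tendsto_intros exp_bot) auto
  thus ?thesis unfolding mobt_def[abs_def] by simp
qed

lemma mobt_bot_inf:
  assumes "d = 0" "a * d - b * c = 1"
  shows "filterlim (mobt (a,b,c,d)) at_infinity at_bot"
proof (rule inv_to_inf)
  have a: "b \<noteq> 0" "c \<noteq> 0" using assms by auto
  have eq: "inverse (mobt (a,b,c,d) t) = (of_real c * (\<i> * of_real (exp t))) /
            (of_real a * (\<i> * of_real (exp t)) + of_real b)" for t
    unfolding mobt_def using assms by simp
  have "((\<lambda>t. (of_real c * (\<i> * of_real (exp t))) /
            (of_real a * (\<i> * of_real (exp t)) + of_real b)) \<longlongrightarrow>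
        (of_real c * (\<i> * 0)) / (of_real a * (\<i> * 0) + of_real b)) at_bot"
    using a by (intro tendsto_intros exp_bot) auto
  thus "((\<lambda>t. inverse (mobt (a,b,c,d) t)) \<longlongrightarrow> 0) at_bot" unfolding eq by simp
  show "eventually (\<lambda>t. mobt (a,b,c,d) t \<noteq> 0) at_bot"
  proof (intro always_eventually allI)
    fix t
    have "Im (mobt (a,b,c,d) t) \<noteq> 0" using a assms unfolding mobt_def by (simp add: Im_divide)
    thus "mobt (a,b,c,d) t \<noteq> 0" by auto
  qed
qed



lemma hom_zero:
  fixes a b c d p x y z :: complex
  assumes E1: "x * c^2 + y * (a * c) + z * a^2 = 0"
      and E2: "x * d^2 + y * (b * d) + z * b^2 = 0"
      and E3: "x + y * p + z * p^2 = 0"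
      and nz: "(a*d - b*c) * (a - p*c) * (b - p*d) \<noteq> 0"
  shows "x = 0 \<and> y = 0 \<and> z = 0"
proof -
  define D where "D = c^2*(b*d*p^2 - b^2*p) - a*c*(d^2*p^2 - b^2) + a^2*(d^2*p - b*d)"
  have D: "D = - ((a*d - b*c) * (a - p*c) * (b - p*d))" unfolding D_def by algebra
  have D0: "D \<noteq> 0" using nz D by simp
  have "D * x = (b*d*p^2 - b^2*p) * (x * c^2 + y * (a * c) + z * a^2)
      - (a*c*p^2 - a^2*p) * (x * d^2 + y * (b * d) + z * b^2)
      + (a*c*b^2 - a^2*b*d) * (x + y * p + z * p^2)" unfolding D_def by algebra
  hence x: "x = 0" using E1 E2 E3 D0 by simp
  have "D * y = - (d^2*p^2 - b^2) * (x * c^2 + y * (a * c) + z * a^2)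
      + (c^2*p^2 - a^2) * (x * d^2 + y * (b * d) + z * b^2)
      - (c^2*b^2 - a^2*d^2) * (x + y * p + z * p^2)" unfolding D_def by algebra
  hence y: "y = 0" using E1 E2 E3 D0 by simp
  have "D * z = (d^2*p - b*d) * (x * c^2 + y * (a * c) + z * a^2)
      - (c^2*p - a*c) * (x * d^2 + y * (b * d) + z * b^2)
      + (c^2*b*d - a*c*d^2) * (x + y * p + z * p^2)" unfolding D_def by algebra
  hence z: "z = 0" using E1 E2 E3 D0 by simp
  show ?thesis using x y z by simp
qed

lemma lin3:
  fixes A B C x y z x0 y0 z0 :: complex
  assumes "x*A + y*B + z*C = 0" "x0*A + y0*B + z0*C = 0"
  shows "(x-x0)*A + (y-y0)*B + (z-z0)*C = 0"
proof -
  have "(x-x0)*A + (y-y0)*B + (z-z0)*C = (x*A + y*B + z*C) - (x0*A + y0*B + z0*C)" by algebra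
  thus ?thesis using assms by simp
qed

lemma vanish_hom:
  fixes a c :: real
  assumes "a \<noteq> 0 \<or> c \<noteq> 0"
  shows "hvf_vanishes_at (x, y, z) (if c = 0 then None else Some (of_real a / of_real c))
     \<longleftrightarrow> x * (of_real c)^2 + y * (of_real a * of_real c) + z * (of_real a)^2 = 0"
proof (cases "c = 0")
  case True thus ?thesis using assms by simp
next
  case False
  hence C: "complex_of_real c \<noteq> 0" by simp
  have "x + y * (of_real a / of_real c) + z * (of_real a / of_real c)^2 =
         (x * (of_real c)^2 + y * (of_real a * of_real c) + z * (of_real a)^2) / (of_real c)^2"
    using C by (simp add: field_simps power2_eq_square)
  hence "x + y * (of_real a / of_real c) + z * (of_real a / of_real c)^2 = 0 \<longleftrightarrow>
         x * (of_real c)^2 + y * (of_real a * of_real c) + z * (of_real a)^2 = 0"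
    using C by simp
  thus ?thesis using False by simp
qed

lemma Yv_val:
  assumes g: "(a,b,c,d) \<in> SL2R" and pv: "push (a,b,c,d) (\<i>, \<i>) = v"
    and sp: "sigma_plus v = (if c = 0 then None else Some (of_real a / of_real c))"
    and sm: "sigma_minus v = (if d = 0 then None else Some (of_real b / of_real d))"
  shows "hvf_eval (Yv v) (fst v) = snd v"
proof -
  have det: "a * d - b * c = 1" using g by (simp add: SL2R_def)
  have ac: "a \<noteq> 0 \<or> c \<noteq> 0" and bd: "b \<noteq> 0 \<or> d \<noteq> 0" using det by auto
  define s where "s = complex_of_real c * \<i> + of_real d"
  have s0: "s \<noteq> 0" using den_nz[OF det, of 1] unfolding s_def by simp
  define p where "p = fst v"
  define w where "w = snd v"
  have p: "p = (of_real a * \<i> + of_real b) / s" using pv unfolding p_def s_def push_def by auto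
  have w: "w = \<i> / s^2" using pv unfolding w_def s_def push_def by auto
  have Imp: "Im p > 0"
    using push_T1H[OF det, of 1] pv unfolding p_def by (auto simp: T1H_def)
  let ?A = "complex_of_real a" and ?B = "complex_of_real b" and ?C = "complex_of_real c" and ?D = "complex_of_real d"
  define Y0 :: hvf where "Y0 = (- ?A * ?B, ?A * ?D + ?B * ?C, - ?C * ?D)"
  let ?P = "\<lambda>Y. hvf_vanishes_at Y (sigma_plus v) \<and> hvf_vanishes_at Y (sigma_minus v)
                  \<and> hvf_eval Y (fst v) = snd v"
  have detC: "?A * ?D - ?B * ?C = 1" using det by (metis of_real_1 of_real_diff of_real_mult)
  have val0: "hvf_eval Y0 p = w"
  proof -
    have "hvf_eval Y0 p = - (?C * p - ?A) * (?D * p - ?B)" unfolding Y0_def by (simp add: algebra_simps power2_eq_square)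
    also have "?C * p - ?A = - 1 / s"
      unfolding p using s0 detC by (simp add: field_simps s_def)
    also have "?D * p - ?B = \<i> / s"
      unfolding p using s0 detC by (simp add: field_simps s_def)
    finally show ?thesis unfolding w by (simp add: power2_eq_square)
  qed
  have P0: "?P Y0"
    unfolding sp sm vanish_hom[OF ac] vanish_hom[OF bd] using val0 unfolding p_def w_def Y0_def
    by (simp add: algebra_simps power2_eq_square)
  have nzf: "(?A*?D - ?B*?C) * (?A - p*?C) * (?B - p*?D) \<noteq> 0"
  proof -
    have 1: "?A - p*?C \<noteq> 0"
    proof
      assume h: "?A - p*?C = 0"
      hence "Im (?A - p*?C) = 0" by simp
      hence "c = 0" using Imp by simp
      thus False using h det by simp
    qed
    have 2: "?B - p*?D \<noteq> 0"
    proof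
      assume h: "?B - p*?D = 0"
      hence "Im (?B - p*?D) = 0" by simp
      hence "d = 0" using Imp by simp
      thus False using h det by simp
    qed
    show ?thesis using 1 2 detC by simp
  qed
  have uniq: "Y = Y0" if "?P Y" for Y
  proof -
    obtain x y z where Y: "Y = (x,y,z)" by (cases Y)
    obtain x0 y0 z0 where Y0': "Y0 = (x0,y0,z0)" by (cases Y0)
    have h1: "hvf_vanishes_at Y (sigma_plus v)" "hvf_vanishes_at Y (sigma_minus v)" "hvf_eval Y p = w"
      using that unfolding p_def w_def by auto
    have h0: "hvf_vanishes_at Y0 (sigma_plus v)" "hvf_vanishes_at Y0 (sigma_minus v)" "hvf_eval Y0 p = w"
      using P0 unfolding p_def w_def by auto
    have "x - x0 = 0 \<and> y - y0 = 0 \<and> z - z0 = 0"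
    proof (rule hom_zero[OF _ _ _ nzf])
      show "(x - x0) * ?C^2 + (y - y0) * (?A * ?C) + (z - z0) * ?A^2 = 0"
        using h1(1) h0(1) unfolding sp vanish_hom[OF ac] Y Y0' by (rule lin3)
      show "(x - x0) * ?D^2 + (y - y0) * (?B * ?D) + (z - z0) * ?B^2 = 0"
        using h1(2) h0(2) unfolding sm vanish_hom[OF bd] Y Y0' by (rule lin3)
      show "(x - x0) + (y - y0) * p + (z - z0) * p^2 = 0"
        proof -
        have "(x - x0) + (y - y0) * p + (z - z0) * p^2 = (x + y*p + z*p^2) - (x0 + y0*p + z0*p^2)" by algebra
        also have "\<dots> = w - w" using h1(3) h0(3) unfolding Y Y0' hvf_eval.simps by (simp only:)
        finally show ?thesis by simp
      qed
    qed
    thus ?thesis using Y Y0' by simp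
  qed
  have "Yv v = Y0" unfolding Yv_def using P0 uniq by (rule the_equality)
  thus ?thesis using P0 by simp
qed



theorem proposition7p7:
  shows "\<forall>q \<in> diag. tangent_to diag q (Zfield q)"
proof
  fix q assume "q \<in> diag"
  then obtain v where v: "v \<in> T1H" and q: "q = (v, fst v)" by (auto simp: diag_def)
  define G where "G = (SOME g. g \<in> SL2R \<and> push g (\<i>, \<i>) = v)"
  have G: "G \<in> SL2R \<and> push G (\<i>, \<i>) = v"
    unfolding G_def using exists_g[OF v] by (rule someI_ex)
  obtain a b c d where abcd: "G = (a,b,c,d)" by (cases G) auto
  have det: "a * d - b * c = 1" using G abcd by (simp add: SL2R_def)
  have gf: "geo_flow t v = push G (\<i> * of_real (exp t), \<i> * of_real (exp t))" for t
    unfolding geo_flow_def G_def Let_def ..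
  have fgf: "(\<lambda>t. fst (geo_flow t v)) = mobt (a,b,c,d)"
    by (rule ext) (simp add: gf push_def mobt_def abcd)
  have at_top_neq_bot: "(at_top :: real filter) \<noteq> bot" using trivial_limit_at_top_linorder by blast
  have at_bot_neq_bot: "(at_bot :: real filter) \<noteq> bot" using trivial_limit_at_bot_linorder by blast
  have sp: "sigma_plus v = (if c = 0 then None else Some (of_real a / of_real c))"
  proof (cases "c = 0")
    case True
    thus ?thesis unfolding sigma_plus_def geo_endpoint_def fgf using mobt_top_inf[OF True det] by simp
  next
    case False
    have L: "(mobt (a,b,c,d) \<longlongrightarrow> of_real a / of_real c) at_top" by (rule mobt_top_fin[OF False])
    have nf: "\<not> filterlim (mobt (a,b,c,d)) at_infinity at_top"
      using not_tendsto_and_filterlim_at_infinity[OF at_top_neq_bot L] by blast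
    have "(THE e. (mobt (a,b,c,d) \<longlongrightarrow> e) at_top) = of_real a / of_real c"
      using L by (rule the_equality) (rule tendsto_unique[OF at_top_neq_bot], auto simp: L)
    thus ?thesis unfolding sigma_plus_def geo_endpoint_def fgf using nf False by simp
  qed
  have sm: "sigma_minus v = (if d = 0 then None else Some (of_real b / of_real d))"
  proof (cases "d = 0")
    case True
    thus ?thesis unfolding sigma_minus_def geo_endpoint_def fgf using mobt_bot_inf[OF True det] by simp
  next
    case False
    have L: "(mobt (a,b,c,d) \<longlongrightarrow> of_real b / of_real d) at_bot" by (rule mobt_bot_fin[OF False])
    have nf: "\<not> filterlim (mobt (a,b,c,d)) at_infinity at_bot"
      using not_tendsto_and_filterlim_at_infinity[OF at_bot_neq_bot L] by blast
    have "(THE e. (mobt (a,b,c,d) \<longlongrightarrow> e) at_bot) = of_real b / of_real d"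
      using L by (rule the_equality) (rule tendsto_unique[OF at_bot_neq_bot], auto simp: L)
    thus ?thesis unfolding sigma_minus_def geo_endpoint_def fgf using nf False by simp
  qed
  have Y: "Ytilde v (fst v) = snd v"
    unfolding Ytilde_def using Yv_val[OF _ _ sp sm] G abcd by auto
  define F1 where "F1 z = mob (a,b,c,d) (\<i> * exp z)" for z :: complex
  define F2 where "F2 z = mob_deriv (a,b,c,d) (\<i> * exp z) * (\<i> * exp z)" for z :: complex
  have gf2: "geo_flow t v = (F1 (of_real t), F2 (of_real t))" for t
    unfolding gf abcd F1_def F2_def push_def by (simp add: exp_of_real)
  have nz: "complex_of_real c * (\<i> * exp z) + of_real d \<noteq> 0" if "z = 0" for z
    using den_nz[OF det, of 1] that by simp
  have "(F1 has_field_derivative (of_real a * (\<i> * exp 0) * (of_real c * (\<i> * exp 0) + of_real d) -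
        (of_real a * (\<i> * exp 0) + of_real b) * (of_real c * (\<i> * exp 0))) /
        (of_real c * (\<i> * exp 0) + of_real d)^2) (at 0)"
    unfolding F1_def mob.simps using nz[of 0]
    by (auto intro!: derivative_eq_intros simp: power2_eq_square)
  moreover have "(of_real a * (\<i> * exp 0) * (of_real c * (\<i> * exp 0) + of_real d) -
        (of_real a * (\<i> * exp 0) + of_real b) * (of_real c * (\<i> * exp 0))) /
        (of_real c * (\<i> * exp 0) + of_real d)^2 = snd v"
  proof -
    have "snd v = \<i> / (complex_of_real c * \<i> + of_real d)^2"
      using G abcd by (auto simp: push_def)
    moreover have "of_real a * \<i> * (of_real c * \<i> + of_real d) - (of_real a * \<i> + of_real b) * (of_real c * \<i>)
       = \<i> * (complex_of_real a * of_real d - of_real b * of_real c)" by algebra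
    moreover have "complex_of_real a * of_real d - of_real b * of_real c = 1"
      using det by (metis of_real_1 of_real_diff of_real_mult)
    ultimately show ?thesis by simp
  qed
  ultimately have D1: "(F1 has_field_derivative snd v) (at (of_real 0))" by simp
  have "\<exists>D2. (F2 has_field_derivative D2) (at 0)"
    unfolding F2_def mob_deriv.simps using nz[of 0]
    by (auto intro!: exI derivative_eq_intros)
  then obtain D2 where D2: "(F2 has_field_derivative D2) (at (of_real 0))" by auto
  have dflow: "((\<lambda>t. geo_flow t v) has_vector_derivative (snd v, D2)) (at 0)"
    unfolding gf2 by (intro has_vector_derivative_Pair has_vector_derivative_real_field D1 D2)
  have gg: "geo_gen v = (snd v, D2)" unfolding geo_gen_def using dflow by (rule vector_derivative_at)
  define C where "C t = (geo_flow t v, fst (geo_flow t v))" for t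
  have dC: "(C has_vector_derivative Zfield q) (at 0)"
  proof -
    have "((\<lambda>t. fst (geo_flow t v)) has_vector_derivative snd v) (at 0)"
      unfolding gf2 using has_vector_derivative_real_field[OF D1, of UNIV] by simp
    hence "(C has_vector_derivative ((snd v, D2), snd v)) (at 0)"
      unfolding C_def by (intro has_vector_derivative_Pair dflow)
    thus ?thesis unfolding Zfield_def q using gg Y by simp
  qed
  have C0: "C 0 = q" unfolding C_def q using G by (simp add: gf)
  have Cin: "C t \<in> diag" for t
  proof -
    have "geo_flow t v \<in> T1H" unfolding gf abcd by (rule push_T1H[OF det]) simp
    thus ?thesis unfolding C_def diag_def by (intro CollectI exI[of _ "geo_flow t v"]) simp
  qed
  show "tangent_to diag q (Zfield q)"
    unfolding tangent_to_def using dC C0 Cin by (intro exI[of _ C] exI[of _ 1]) auto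
qed

end
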